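(* Let $X$ be a real Banach space. The following statements are equivalent. (1) $X$ is rotund. (2) $r(Q_{B_X}(x_1),Q_{B_X}(x_2))=\|x_1-x_2\|$ for every $x_1,x_2\in S_X$. (3) $r(Q_{S_X}(x_1),Q_{S_X}(x_2))=\|x_1-x_2\|$ for every $x_1,x_2\in S_X$. (4) $r(Q_{S_X}(x_1),Q_{S_X}(x_2))=\|x_1-x_2\|$ for every $x_1,x_2\in S_X$ with $x_1\neq x_2$.
   Context: $B_X$ and $S_X$ denote the closed unit ball and unit sphere of $X$. For a non-empty bounded $F\subseteq X$ and $x\in X$, $r(F,x)=\sup\{\|x-y\|:y\in F\}$ and $Q_F(x)=\{y\in F:\|x-y\|=r(F,x)\}$. For non-empty bounded sets $A,B$, the generalized diameter is $r(A,B)=\sup\{\|a-b\|:a\in A,b\in B\}$. $X$ is rotund if $\|\frac{x_1+x_2}{2}\|<1$ whenever $x_1,x_2\in S_X$, $x_1\neq x_2$. *)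

theory Defs
  imports "HOL-Analysis.Analysis"
begin

definition farthest_radius :: "'a::real_normed_vector set \<Rightarrow> 'a \<Rightarrow> real" where
  "farthest_radius F x = Sup {norm (x - y) | y. y \<in> F}"

definition farthest_points :: "'a::real_normed_vector set \<Rightarrow> 'a \<Rightarrow> 'a set" where
  "farthest_points F x = {y \<in> F. norm (x - y) = farthest_radius F x}"

definition gen_diam :: "'a::real_normed_vector set \<Rightarrow> 'a set \<Rightarrow> real" where
  "gen_diam A B = Sup {norm (a - b) | a b. a \<in> A \<and> b \<in> B}"

definition rotund :: "'a::real_normed_vector itself \<Rightarrow> bool" where
  "rotund (TYPE('a)) \<longleftrightarrow>
     (\<forall>x1 x2 :: 'a. x1 \<in> sphere 0 1 \<longrightarrow> x2 \<in> sphere 0 1 \<longrightarrow> x1 \<noteq> x2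
        \<longrightarrow> norm ((1/2) *\<^sub>R (x1 + x2)) < 1)"

end

theory Submission
  imports Defs
begin

lemma fr2:
  fixes x :: "'a::real_normed_vector"
  assumes "norm x = 1" "-x \<in> F" "F \<subseteq> cball 0 1"
  shows "farthest_radius F x = 2"
proof -
  have m: "2 \<in> {norm (x - y) |y. y \<in> F}"
    using assms by (auto intro!: exI[of _ "-x"] simp flip: scaleR_2)
  have u: "\<forall>z\<in>{norm (x - y) |y. y \<in> F}. z \<le> 2"
  proof safe
    fix y assume "y \<in> F"
    hence "norm y \<le> 1" using assms by auto
    thus "norm (x - y) \<le> 2" using norm_triangle_ineq4[of x y] assms by simp
  qed
  show ?thesis unfolding farthest_radius_def by (rule cSup_eq_maximum[OF m]) (use u in blast)
qed

lemma Qeq: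
  fixes x :: "'a::real_normed_vector"
  assumes "norm x = 1"
  shows "farthest_points (cball 0 1) x = {y. norm y = 1 \<and> norm (x - y) = 2}"
    and "farthest_points (sphere 0 1) x = {y. norm y = 1 \<and> norm (x - y) = 2}"
proof -
  have a: "farthest_radius (cball 0 1) x = 2" by (rule fr2) (use assms in auto)
  have b: "farthest_radius (sphere 0 1) x = 2" by (rule fr2) (use assms in auto)
  have c: "norm y = 1" if "norm y \<le> 1" "norm (x - y) = 2" for y
    using norm_triangle_ineq4[of x y] assms that by simp
  show "farthest_points (cball 0 1) x = {y. norm y = 1 \<and> norm (x - y) = 2}"
    unfolding farthest_points_def a using c by auto
  show "farthest_points (sphere 0 1) x = {y. norm y = 1 \<and> norm (x - y) = 2}"
    unfolding farthest_points_def b by auto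
qed

lemma rot_Q:
  fixes x :: "'a::real_normed_vector"
  assumes r: "rotund TYPE('a)" and "norm x = 1"
  shows "{y. norm y = 1 \<and> norm (x - y) = 2} = {-x}"
proof safe
  fix y assume y: "norm y = 1" "norm (x - y) = 2"
  show "y = -x"
  proof (rule ccontr)
    assume "y \<noteq> -x"
    hence "x \<noteq> -y" by auto
    from r have "\<forall>a b::'a. norm a = 1 \<longrightarrow> norm b = 1 \<longrightarrow> a \<noteq> b \<longrightarrow> norm (a + b) < 2"
      unfolding rotund_def by simp
    hence "norm (x + - y) < 2" using assms(2) y(1) \<open>x \<noteq> -y\<close> by (metis norm_minus_cancel)
    thus False using y by simp
  qed
qed (use assms in \<open>auto simp flip: scaleR_2\<close>)

lemma gd_single:
  fixes x1 x2 :: "'a::real_normed_vector"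
  shows "gen_diam {-x1} {-x2} = norm (x1 - x2)"
proof -
  have "{norm (a - b) |a b. a \<in> {-x1} \<and> b \<in> {-x2}} = {norm (x1 - x2)}"
    by (auto simp: norm_minus_commute)
  thus ?thesis unfolding gen_diam_def by simp
qed

lemma notrot:
  fixes x1 x2 :: "'a::real_normed_vector"
  assumes n: "norm x1 = 1" "norm x2 = 1" "x1 \<noteq> x2"
    and h: "\<not> norm ((1/2) *\<^sub>R (x1 + x2)) < 1"
  shows "\<exists>y1 y2::'a. norm y1 = 1 \<and> norm y2 = 1 \<and> y1 \<noteq> y2 \<and>
     gen_diam {y. norm y = 1 \<and> norm (y1 - y) = 2} {y. norm y = 1 \<and> norm (y2 - y) = 2} \<noteq> norm (y1 - y2)"
proof -
  have s: "norm (x1 + x2) = 2"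
    using h norm_triangle_ineq[of x1 x2] n by simp
  define z where "z = (1/2) *\<^sub>R (x1 + x2)"
  have nz: "norm z = 1" unfolding z_def using s by simp
  have e: "(3 *\<^sub>R x1 + x2) + (x1 + 3 *\<^sub>R x2) = 4 *\<^sub>R (x1 + x2)"
  proof -
    have "(3 *\<^sub>R x1 + x2) + (x1 + 3 *\<^sub>R x2) = (3 *\<^sub>R x1 + 1 *\<^sub>R x1) + (1 *\<^sub>R x2 + 3 *\<^sub>R x2)" by (simp add: algebra_simps)
    also have "... = 4 *\<^sub>R (x1 + x2)" by (simp only: scaleR_left_distrib[symmetric] scaleR_right_distrib) simp
    finally show ?thesis .
  qed
  have "norm (4 *\<^sub>R (x1 + x2)) = 8" using s by simp
  hence "8 \<le> norm (3 *\<^sub>R x1 + x2) + norm (x1 + 3 *\<^sub>R x2)"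
    using norm_triangle_ineq[of "3 *\<^sub>R x1 + x2" "x1 + 3 *\<^sub>R x2"] e by simp
  moreover have "norm (3 *\<^sub>R x1 + x2) \<le> 4"
    using norm_triangle_ineq[of "3 *\<^sub>R x1" x2] n by simp
  moreover have "norm (x1 + 3 *\<^sub>R x2) \<le> 4"
    using norm_triangle_ineq[of x1 "3 *\<^sub>R x2"] n by simp
  ultimately have t: "norm (3 *\<^sub>R x1 + x2) = 4" by linarith
  have h32: "x1 + (1 / 2) *\<^sub>R x1 = (3 / 2) *\<^sub>R x1"
  proof -
    have "x1 + (1 / 2) *\<^sub>R x1 = 1 *\<^sub>R x1 + (1 / 2) *\<^sub>R x1" by simp
    also have "... = (3/2) *\<^sub>R x1" by (simp only: scaleR_left_distrib[symmetric]) simp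
    finally show ?thesis .
  qed
  have "z - - x1 = (1/2) *\<^sub>R (3 *\<^sub>R x1 + x2)" unfolding z_def
    by (simp add: algebra_simps h32)
  hence zx: "norm (z - - x1) = 2" using t by simp
  have hh: "(1/2) *\<^sub>R x1 + (1/2) *\<^sub>R x1 = x1"
    by (simp only: scaleR_left_distrib[symmetric]) simp
  have x1z: "x1 - z = (1/2) *\<^sub>R (x1 - x2)" unfolding z_def
    by (simp add: algebra_simps) (simp only: hh)
  have pos: "norm (x1 - x2) > 0" using n by simp
  let ?A = "{y. norm y = 1 \<and> norm (x1 - y) = 2}"
  let ?B = "{y. norm y = 1 \<and> norm (z - y) = 2}"
  let ?S = "{norm (a - b) |a b. a \<in> ?A \<and> b \<in> ?B}"
  have "norm (-x2 - -x1) \<in> ?S" using s n zx by fastforce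
  moreover have "bdd_above ?S"
  proof (rule bdd_aboveI[of _ 2])
    fix v assume "v \<in> ?S"
    then obtain a b where ab: "v = norm (a - b)" "a \<in> ?A" "b \<in> ?B" by blast
    thus "v \<le> 2" using norm_triangle_ineq4[of a b] by simp
  qed
  ultimately have "norm (-x2 - -x1) \<le> gen_diam ?A ?B"
    unfolding gen_diam_def by (rule cSup_upper)
  moreover have "norm (-x2 - -x1) = norm (x1 - x2)"
    by (simp add: norm_minus_commute)
  moreover have "norm (x1 - z) = norm (x1 - x2) / 2" using x1z by simp
  ultimately have "gen_diam ?A ?B \<noteq> norm (x1 - z)" using pos by linarith
  moreover have "x1 \<noteq> z" using x1z n by auto
  ultimately have "norm x1 = 1 \<and> norm z = 1 \<and> x1 \<noteq> z \<and> gen_diam ?A ?B \<noteq> norm (x1 - z)"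
    using n nz by simp
  thus ?thesis by blast
qed

theorem theorem3p3:
  shows "(rotund TYPE('a::banach)
      \<longleftrightarrow> (\<forall>x1 x2 :: 'a. x1 \<in> sphere 0 1 \<longrightarrow> x2 \<in> sphere 0 1 \<longrightarrow>
            gen_diam (farthest_points (cball 0 1) x1) (farthest_points (cball 0 1) x2) = norm (x1 - x2)))
    \<and> (rotund TYPE('a)
      \<longleftrightarrow> (\<forall>x1 x2 :: 'a. x1 \<in> sphere 0 1 \<longrightarrow> x2 \<in> sphere 0 1 \<longrightarrow>
            gen_diam (farthest_points (sphere 0 1) x1) (farthest_points (sphere 0 1) x2) = norm (x1 - x2)))
    \<and> (rotund TYPE('a)
      \<longleftrightarrow> (\<forall>x1 x2 :: 'a. x1 \<in> sphere 0 1 \<longrightarrow> x2 \<in> sphere 0 1 \<longrightarrow> x1 \<noteq> x2 \<longrightarrow>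
            gen_diam (farthest_points (sphere 0 1) x1) (farthest_points (sphere 0 1) x2) = norm (x1 - x2)))"
proof -
  let ?Q = "\<lambda>x::'a. {y. norm y = 1 \<and> norm (x - y) = 2}"
  let ?C = "\<forall>x1 x2 :: 'a. norm x1 = 1 \<longrightarrow> norm x2 = 1 \<longrightarrow> gen_diam (?Q x1) (?Q x2) = norm (x1 - x2)"
  let ?C' = "\<forall>x1 x2 :: 'a. norm x1 = 1 \<longrightarrow> norm x2 = 1 \<longrightarrow> x1 \<noteq> x2 \<longrightarrow> gen_diam (?Q x1) (?Q x2) = norm (x1 - x2)"
  have PC: "?C" if r: "rotund TYPE('a)"
  proof (intro allI impI)
    fix x1 x2 :: 'a assume "norm x1 = 1" "norm x2 = 1"
    thus "gen_diam (?Q x1) (?Q x2) = norm (x1 - x2)"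
      using rot_Q[OF r] gd_single by simp
  qed
  have CP: "rotund TYPE('a)" if c: ?C'
    unfolding rotund_def
  proof (intro allI impI)
    fix x1 x2 :: 'a assume h: "x1 \<in> sphere 0 1" "x2 \<in> sphere 0 1" "x1 \<noteq> x2"
    show "norm ((1/2) *\<^sub>R (x1 + x2)) < 1"
    proof (rule ccontr)
      assume "\<not> norm ((1/2) *\<^sub>R (x1 + x2)) < 1"
      from notrot[OF _ _ h(3) this] h obtain y1 y2 :: 'a where
        "norm y1 = 1" "norm y2 = 1" "y1 \<noteq> y2"
        "gen_diam (?Q y1) (?Q y2) \<noteq> norm (y1 - y2)" by auto
      thus False using c by blast
    qed
  qed
  have i: "rotund TYPE('a) \<longleftrightarrow> ?C" using PC CP by blast
  have ii: "rotund TYPE('a) \<longleftrightarrow> ?C'" using PC CP by blast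
  show ?thesis using i ii by (simp add: Qeq)
qed

end
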